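(* Let $M$ be an $n\times n$ complex matrix, $k\in\{3,\dots,n-1\}$ and $p$ a positive integer with $p\leq k$. If $M$ is $k$-spectrally monomorphic, then for every subset $\beta\subseteq[n]$ with $|\beta|\leq n-k$, the number \[ \sum_{\alpha\supseteq\beta,\ |\alpha|=p}\det(M[\alpha]) \] (sum over subsets $\alpha\subseteq[n]$ of size $p$ containing $\beta$) depends only on the cardinality of $\beta$.
   Context: $[n]=\{1,\dots,n\}$. For $\alpha\subseteq[n]$, $M[\alpha]$ is the principal submatrix of $M$ with rows and columns indexed by $\alpha$. A square matrix is $k$-spectrally monomorphic if all its $k\times k$ principal submatrices have the same characteristic polynomial $\det(zI-M[\alpha])$. *)

theory Defs
  imports Jordan_Normal_Form.Char_Poly Jordan_Normal_Form.DL_Submatrix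
begin

text \<open>Principal submatrix M[alpha]; indices are 0-based, so [n] is rendered as {0..<n}.\<close>
definition principal_submatrix :: "'a mat \<Rightarrow> nat set \<Rightarrow> 'a mat" where
  "principal_submatrix M \<alpha> = submatrix M \<alpha> \<alpha>"

definition spectrally_monomorphic :: "nat \<Rightarrow> 'a :: comm_ring_1 mat \<Rightarrow> bool" where
  "spectrally_monomorphic k M \<longleftrightarrow>
     (\<forall>\<alpha> \<gamma>. \<alpha> \<subseteq> {0..<dim_row M} \<and> card \<alpha> = k \<and> \<gamma> \<subseteq> {0..<dim_row M} \<and> card \<gamma> = k
        \<longrightarrow> char_poly (principal_submatrix M \<alpha>) = char_poly (principal_submatrix M \<gamma>))"

end

theory Submission
  imports Defs
begin


lemma sum_Pow_card:
  fixes \<phi> :: "nat \<Rightarrow> 'a::comm_ring_1"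
  assumes "finite X"
  shows "(\<Sum>\<delta>\<in>Pow X. \<phi> (card \<delta>)) = (\<Sum>d\<le>card X. of_nat (card X choose d) * \<phi> d)"
proof -
  have "(\<Sum>\<delta>\<in>Pow X. \<phi> (card \<delta>)) = (\<Sum>d\<le>card X. \<Sum>\<delta>\<in>{\<delta>\<in>Pow X. card \<delta> = d}. \<phi> (card \<delta>))"
    by (rule sum.group[symmetric]) (use assms card_mono in auto)
  also have "\<dots> = (\<Sum>d\<le>card X. of_nat (card X choose d) * \<phi> d)"
  proof (rule sum.cong[OF refl])
    fix d
    have "(\<Sum>\<delta>\<in>{\<delta>\<in>Pow X. card \<delta> = d}. \<phi> (card \<delta>)) = (\<Sum>\<delta>\<in>{\<delta>\<in>Pow X. card \<delta> = d}. \<phi> d)"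
      by (rule sum.cong) auto
    also have "\<dots> = of_nat (card {\<delta>\<in>Pow X. card \<delta> = d}) * \<phi> d" by simp
    also have "{\<delta>\<in>Pow X. card \<delta> = d} = {B. B \<subseteq> X \<and> card B = d}" by auto
    finally show "(\<Sum>\<delta>\<in>{\<delta>\<in>Pow X. card \<delta> = d}. \<phi> (card \<delta>)) = of_nat (card X choose d) * \<phi> d"
      using n_subsets[OF assms] by simp
  qed
  finally show ?thesis .
qed

lemma alt_Pow:
  assumes "finite X"
  shows "(\<Sum>\<delta>\<in>Pow X. (-1::'a::comm_ring_1) ^ card \<delta>) = (if X = {} then 1 else 0)"
proof (cases "X = {}")
  case False
  then have "card X > 0" using assms by auto
  then show ?thesis using False sum_Pow_card[OF assms, of "\<lambda>d. (-1::'a) ^ d"]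
    choose_alternating_sum[of "card X"] by (simp add: mult.commute)
qed simp

lemma count_unique:
  assumes "finite T" "x \<in> T" "x' \<in> T" "card {y\<in>T. y < x} = card {y\<in>T. y < (x'::nat)}"
  shows "x = x'"
proof (rule ccontr)
  assume ne: "x \<noteq> x'"
  { fix a b :: nat assume "a \<in> T" "b \<in> T" "a < b"
    then have "{y\<in>T. y < a} \<subset> {y\<in>T. y < b}" by auto
    then have "card {y\<in>T. y < a} < card {y\<in>T. y < b}"
      using assms(1) by (intro psubset_card_mono) auto }
  then show False using ne assms by (metis less_irrefl nat_neq_iff)
qed

lemma pick_delete:
  assumes "finite S" "i < card S" "a < card S - 1"
  shows "pick (S - {pick S i}) a = pick S (if a < i then a else Suc a)"
proof -
  define b where "b = (if a < i then a else Suc a)"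
  define s where "s = pick S i"
  have b: "b < card S" using assms unfolding b_def by auto
  have s: "s \<in> S" using pick_in_set[of i S] assms unfolding s_def by auto
  have bS: "pick S b \<in> S" using pick_in_set[of b S] b by auto
  have bs: "pick S b \<noteq> s"
  proof (cases "a < i")
    case True
    then show ?thesis unfolding s_def b_def using pick_mono[of i S a] assms by auto
  next
    case False
    then have "i < b" unfolding b_def by auto
    then show ?thesis unfolding s_def using pick_mono[of b S i] b by auto
  qed
  have cnt: "card {y\<in>S - {s}. y < pick S b} = a"
  proof (cases "a < i")
    case True
    then have "pick S b < s" unfolding b_def s_def using pick_mono[of i S a] assms by auto
    then have "{y\<in>S - {s}. y < pick S b} = {y\<in>S. y < pick S b}" by auto
    then show ?thesis using card_pick[of b S] b True unfolding b_def by auto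
  next
    case False
    then have "s < pick S b" unfolding b_def s_def using pick_mono[of "Suc a" S i] b b_def by auto
    then have "{y\<in>S - {s}. y < pick S b} = {y\<in>S. y < pick S b} - {s}" by auto
    moreover have "s \<in> {y\<in>S. y < pick S b}" using s \<open>s < pick S b\<close> by auto
    ultimately have "card {y\<in>S - {s}. y < pick S b} = card {y\<in>S. y < pick S b} - 1"
      using assms(1) by simp
    then show ?thesis using card_pick[of b S] b False unfolding b_def by auto
  qed
  have cS: "card (S - {s}) = card S - 1" using s assms by simp
  have p1: "pick (S - {s}) a \<in> S - {s}" using pick_in_set[of a "S - {s}"] cS assms by auto
  have p2: "card {y\<in>S - {s}. y < pick (S - {s}) a} = a" using card_pick[of a "S - {s}"] cS assms by auto
  show ?thesis unfolding b_def[symmetric] s_def[symmetric]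
    by (rule count_unique[of "S - {s}"]) (use assms(1) p1 bS bs p2 cnt in auto)
qed



lemma set_lt_eq: "\<gamma> \<subseteq> {0..<n} \<Longrightarrow> {j. j < n \<and> j \<in> \<gamma>} = \<gamma>" by auto

lemma P_carrier:
  assumes "M \<in> carrier_mat n n" "\<gamma> \<subseteq> {0..<n}"
  shows "principal_submatrix M \<gamma> \<in> carrier_mat (card \<gamma>) (card \<gamma>)"
  using assms unfolding principal_submatrix_def carrier_mat_def
  by (auto simp: dim_submatrix set_lt_eq)

lemma P_delete:
  assumes M: "M \<in> carrier_mat n n" and g: "\<gamma> \<subseteq> {0..<n}" and i: "i < card \<gamma>"
  shows "mat_delete (principal_submatrix M \<gamma>) i i = principal_submatrix M (\<gamma> - {pick \<gamma> i})"
proof -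
  have fin: "finite \<gamma>" using g finite_subset by blast
  have pin: "pick \<gamma> i \<in> \<gamma>" using pick_in_set[of i \<gamma>] i by auto
  have g2: "\<gamma> - {pick \<gamma> i} \<subseteq> {0..<n}" using g by auto
  have c2: "card (\<gamma> - {pick \<gamma> i}) = card \<gamma> - 1" using pin fin by simp
  have dr: "dim_row M = n" "dim_col M = n" using M by auto
  show ?thesis
  proof (rule eq_matI)
    show "dim_row (mat_delete (principal_submatrix M \<gamma>) i i) = dim_row (principal_submatrix M (\<gamma> - {pick \<gamma> i}))"
      using P_carrier[OF M g] P_carrier[OF M g2] c2 by auto
    show "dim_col (mat_delete (principal_submatrix M \<gamma>) i i) = dim_col (principal_submatrix M (\<gamma> - {pick \<gamma> i}))"
      using P_carrier[OF M g] P_carrier[OF M g2] c2 by auto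
    fix a b
    assume a: "a < dim_row (principal_submatrix M (\<gamma> - {pick \<gamma> i}))"
      and b: "b < dim_col (principal_submatrix M (\<gamma> - {pick \<gamma> i}))"
    then have a': "a < card \<gamma> - 1" and b': "b < card \<gamma> - 1"
      using P_carrier[OF M g2] c2 by auto
    define sa where "sa = (if a < i then a else Suc a)"
    define sb where "sb = (if b < i then b else Suc b)"
    have sa: "sa < card \<gamma>" "sb < card \<gamma>" using a' b' unfolding sa_def sb_def by auto
    have "mat_delete (principal_submatrix M \<gamma>) i i $$ (a, b) = principal_submatrix M \<gamma> $$ (sa, sb)"
      unfolding mat_delete_def sa_def sb_def using a' b' P_carrier[OF M g] by auto
    also have "\<dots> = M $$ (pick \<gamma> sa, pick \<gamma> sb)"
      unfolding principal_submatrix_def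
      by (rule submatrix_index) (use sa dr set_lt_eq[OF g] in auto)
    also have "\<dots> = M $$ (pick (\<gamma> - {pick \<gamma> i}) a, pick (\<gamma> - {pick \<gamma> i}) b)"
      unfolding sa_def sb_def using pick_delete[OF fin i a'] pick_delete[OF fin i b'] by simp
    also have "\<dots> = principal_submatrix M (\<gamma> - {pick \<gamma> i}) $$ (a, b)"
      unfolding principal_submatrix_def
      by (rule submatrix_index[symmetric]) (use a' b' c2 dr set_lt_eq[OF g2] in auto)
    finally show "mat_delete (principal_submatrix M \<gamma>) i i $$ (a, b) = principal_submatrix M (\<gamma> - {pick \<gamma> i}) $$ (a, b)" .
  qed
qed

lemma pick_bij:
  assumes "finite \<gamma>"
  shows "bij_betw (pick \<gamma>) {..<card \<gamma>} \<gamma>"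
proof -
  have inj: "inj_on (pick \<gamma>) {..<card \<gamma>}"
    unfolding inj_on_def by (metis lessThan_iff nat_neq_iff pick_mono less_irrefl)
  have sub: "pick \<gamma> ` {..<card \<gamma>} \<subseteq> \<gamma>" using pick_in_set by auto
  have "card (pick \<gamma> ` {..<card \<gamma>}) = card \<gamma>" using card_image[OF inj] by simp
  then have "pick \<gamma> ` {..<card \<gamma>} = \<gamma>" using card_subset_eq[OF assms sub] by simp
  then show ?thesis using inj unfolding bij_betw_def by simp
qed

lemma pderiv_P:
  fixes M :: "'a :: idom mat"
  assumes M: "M \<in> carrier_mat n n" and g: "\<gamma> \<subseteq> {0..<n}"
  shows "pderiv (char_poly (principal_submatrix M \<gamma>)) = (\<Sum>x\<in>\<gamma>. char_poly (principal_submatrix M (\<gamma> - {x})))"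
proof -
  have fin: "finite \<gamma>" using g finite_subset by blast
  have "pderiv (char_poly (principal_submatrix M \<gamma>)) = (\<Sum>i<card \<gamma>. char_poly (mat_delete (principal_submatrix M \<gamma>) i i))"
    by (rule pderiv_char_poly[OF P_carrier[OF M g]])
  also have "\<dots> = (\<Sum>i<card \<gamma>. char_poly (principal_submatrix M (\<gamma> - {pick \<gamma> i})))"
    by (rule sum.cong[OF refl]) (simp add: P_delete[OF M g])
  also have "\<dots> = (\<Sum>x\<in>\<gamma>. char_poly (principal_submatrix M (\<gamma> - {x})))"
    using sum.reindex_bij_betw[OF pick_bij[OF fin], of "\<lambda>x. char_poly (principal_submatrix M (\<gamma> - {x}))"] by simp
  finally show ?thesis .
qed



lemma double_count:
  fixes f :: "nat set \<Rightarrow> 'a::comm_semiring_1"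
  assumes G: "finite G"
  shows "(\<Sum>\<alpha>\<in>{\<alpha>. \<alpha> \<subseteq> G \<and> card \<alpha> = Suc s}. \<Sum>x\<in>\<alpha>. f (\<alpha> - {x}))
       = (\<Sum>\<beta>\<in>{\<beta>. \<beta> \<subseteq> G \<and> card \<beta> = s}. of_nat (card G - s) * f \<beta>)"
proof -
  let ?A = "{\<alpha>. \<alpha> \<subseteq> G \<and> card \<alpha> = Suc s}"
  let ?B = "{\<beta>. \<beta> \<subseteq> G \<and> card \<beta> = s}"
  have fA: "finite ?A" using G by (auto intro: finite_subset[of _ "Pow G"])
  have fB: "finite ?B" using G by (auto intro: finite_subset[of _ "Pow G"])
  have "(\<Sum>\<alpha>\<in>?A. \<Sum>x\<in>\<alpha>. f (\<alpha> - {x})) = (\<Sum>(\<alpha>,x)\<in>Sigma ?A (\<lambda>\<alpha>. \<alpha>). f (\<alpha> - {x}))"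
    by (rule sum.Sigma) (use fA G finite_subset in auto)
  also have "\<dots> = (\<Sum>(\<beta>,x)\<in>Sigma ?B (\<lambda>\<beta>. G - \<beta>). f \<beta>)"
  proof (rule sum.reindex_bij_witness[where i = "\<lambda>(\<beta>,x). (insert x \<beta>, x)" and j = "\<lambda>(\<alpha>,x). (\<alpha> - {x}, x)"])
    fix a assume "a \<in> Sigma ?A (\<lambda>\<alpha>. \<alpha>)"
    then obtain \<alpha> x where a: "a = (\<alpha>, x)" "\<alpha> \<subseteq> G" "card \<alpha> = Suc s" "x \<in> \<alpha>" by auto
    have fa: "finite \<alpha>" using a G finite_subset by blast
    show "(case (case a of (\<alpha>, x) \<Rightarrow> (\<alpha> - {x}, x)) of (\<beta>, x) \<Rightarrow> (insert x \<beta>, x)) = a"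
      using a by auto
    show "(case a of (\<alpha>, x) \<Rightarrow> (\<alpha> - {x}, x)) \<in> Sigma ?B (\<lambda>\<beta>. G - \<beta>)"
      using a fa by auto
    show "(case case a of (\<alpha>, x) \<Rightarrow> (\<alpha> - {x}, x) of (\<beta>, x) \<Rightarrow> f \<beta>) = (case a of (\<alpha>, x) \<Rightarrow> f (\<alpha> - {x}))"
      using a by auto
  next
    fix b assume "b \<in> Sigma ?B (\<lambda>\<beta>. G - \<beta>)"
    then obtain \<beta> x where b: "b = (\<beta>, x)" "\<beta> \<subseteq> G" "card \<beta> = s" "x \<in> G" "x \<notin> \<beta>" by auto
    have fb: "finite \<beta>" using b G finite_subset by blast
    show "(case (case b of (\<beta>, x) \<Rightarrow> (insert x \<beta>, x)) of (\<alpha>, x) \<Rightarrow> (\<alpha> - {x}, x)) = b"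
      using b by auto
    show "(case b of (\<beta>, x) \<Rightarrow> (insert x \<beta>, x)) \<in> Sigma ?A (\<lambda>\<alpha>. \<alpha>)"
      using b fb by auto
  qed
  also have "\<dots> = (\<Sum>\<beta>\<in>?B. \<Sum>x\<in>G - \<beta>. f \<beta>)"
    by (rule sum.Sigma[symmetric]) (use fB G in auto)
  also have "\<dots> = (\<Sum>\<beta>\<in>?B. of_nat (card G - s) * f \<beta>)"
  proof (rule sum.cong[OF refl])
    fix \<beta> assume "\<beta> \<in> ?B"
    then have "card (G - \<beta>) = card G - s" using G by (auto simp: card_Diff_subset finite_subset)
    then show "(\<Sum>x\<in>G - \<beta>. f \<beta>) = of_nat (card G - s) * f \<beta>" by simp
  qed
  finally show ?thesis .
qed

lemma funpow_pderiv_smult: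
  "(pderiv ^^ j) (Polynomial.smult c p) = Polynomial.smult c ((pderiv ^^ j) p)"
  by (induction j) (auto simp: pderiv_smult)

lemma iterate:
  fixes M :: "'a :: idom mat"
  assumes M: "M \<in> carrier_mat n n" and g: "\<gamma> \<subseteq> {0..<n}" and j: "j \<le> card \<gamma>"
  shows "(pderiv ^^ j) (char_poly (principal_submatrix M \<gamma>)) =
     Polynomial.smult (of_nat (fact j)) (\<Sum>\<alpha>\<in>{\<alpha>. \<alpha> \<subseteq> \<gamma> \<and> card \<alpha> = card \<gamma> - j}. char_poly (principal_submatrix M \<alpha>))"
  using j
proof (induction j)
  case 0
  have fin: "finite \<gamma>" using g finite_subset by blast
  have "{\<alpha>. \<alpha> \<subseteq> \<gamma> \<and> card \<alpha> = card \<gamma>} = {\<gamma>}"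
    using fin by (auto dest: card_subset_eq)
  then show ?case by simp
next
  case (Suc j)
  have fin: "finite \<gamma>" using g finite_subset by blast
  define s where "s = card \<gamma> - Suc j"
  have sj: "card \<gamma> - j = Suc s" "card \<gamma> - s = Suc j" using Suc.prems unfolding s_def by auto
  have "(pderiv ^^ Suc j) (char_poly (principal_submatrix M \<gamma>)) =
     pderiv (Polynomial.smult (of_nat (fact j)) (\<Sum>\<alpha>\<in>{\<alpha>. \<alpha> \<subseteq> \<gamma> \<and> card \<alpha> = Suc s}. char_poly (principal_submatrix M \<alpha>)))"
    using Suc by (simp add: sj)
  also have "\<dots> = Polynomial.smult (of_nat (fact j)) (\<Sum>\<alpha>\<in>{\<alpha>. \<alpha> \<subseteq> \<gamma> \<and> card \<alpha> = Suc s}. \<Sum>x\<in>\<alpha>. char_poly (principal_submatrix M (\<alpha> - {x})))"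
    unfolding pderiv_smult pderiv_sum
    by (intro arg_cong[where f = "Polynomial.smult _"] sum.cong refl pderiv_P[OF M]) (use g in auto)
  also have "\<dots> = Polynomial.smult (of_nat (fact j)) (\<Sum>\<beta>\<in>{\<beta>. \<beta> \<subseteq> \<gamma> \<and> card \<beta> = s}. of_nat (Suc j) * char_poly (principal_submatrix M \<beta>))"
    using double_count[OF fin, where s=s and f="\<lambda>\<beta>. char_poly (principal_submatrix M \<beta>)"] sj by simp
  also have "\<dots> = Polynomial.smult (of_nat (fact (Suc j))) (\<Sum>\<beta>\<in>{\<beta>. \<beta> \<subseteq> \<gamma> \<and> card \<beta> = s}. char_poly (principal_submatrix M \<beta>))"
    by (simp add: of_nat_poly smult_sum2 smult_smult algebra_simps)
  finally show ?case unfolding s_def .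
qed

lemma char_poly_at_0:
  fixes A :: "'a :: comm_ring_1 mat"
  assumes A: "A \<in> carrier_mat m m"
  shows "poly (char_poly A) 0 = (-1)^m * det A"
proof -
  have "poly (char_poly A) 0 = det ((-1) \<cdot>\<^sub>m A)"
    unfolding char_poly_def
    by (rule poly_det_cong[of _ m]) (use A in \<open>auto simp: char_poly_matrix_def\<close>)
  then show ?thesis using A by simp
qed



theorem proposition2p3:
  fixes M :: "complex mat" and n k p :: nat
  assumes "M \<in> carrier_mat n n"
    and "3 \<le> k" and "k \<le> n - 1"
    and "0 < p" and "p \<le> k"
    and "spectrally_monomorphic k M"
  shows "\<exists>f :: nat \<Rightarrow> complex. \<forall>\<beta>. \<beta> \<subseteq> {0..<n} \<and> card \<beta> \<le> n - k \<longrightarrow>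
           (\<Sum>\<alpha> \<in> {\<alpha>. \<alpha> \<subseteq> {0..<n} \<and> \<beta> \<subseteq> \<alpha> \<and> card \<alpha> = p}.
               det (principal_submatrix M \<alpha>)) = f (card \<beta>)"
proof -
  note M = assms(1)
  have kn: "k \<le> n" using assms(2,3) by linarith
  let ?P = "principal_submatrix M"
  define q where "q = char_poly (?P {0..<k})"
  have dr: "dim_row M = n" using M by auto
  have sm: "char_poly (?P \<alpha>) = char_poly (?P \<gamma>)"
    if "\<alpha> \<subseteq> {0..<n}" "card \<alpha> = k" "\<gamma> \<subseteq> {0..<n}" "card \<gamma> = k" for \<alpha> \<gamma>
    using assms(6) that unfolding spectrally_monomorphic_def dr by blast
  have k1: "{0..<k} \<subseteq> {0..<n}" "card {0..<k} = k" using kn by auto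
  have cpk: "char_poly (?P \<gamma>) = q" if "\<gamma> \<subseteq> {0..<n}" "card \<gamma> = k" for \<gamma>
    unfolding q_def by (rule sm[OF that k1])
  define H :: "nat \<Rightarrow> complex" where "H m = (-1)^p * poly ((pderiv^^(k-p)) q) 0
      * of_nat (fact (m-k)) * of_nat (m choose k) / of_nat (fact (m-p))" for m
  have F: "(\<Sum>\<alpha>\<in>{\<alpha>. \<alpha> \<subseteq> T \<and> card \<alpha> = p}. det (?P \<alpha>)) = H (card T)"
    if T: "T \<subseteq> {0..<n}" "k \<le> card T" for T
  proof -
    define m where "m = card T"
    have finT: "finite T" using T finite_subset by blast
    define c :: complex where "c = of_nat (fact (m-k)) * of_nat (m choose k)"
    have "(pderiv ^^ (m-k)) (char_poly (?P T)) =
      Polynomial.smult (of_nat (fact (m-k))) (\<Sum>\<gamma>\<in>{\<gamma>. \<gamma> \<subseteq> T \<and> card \<gamma> = m - (m-k)}. char_poly (?P \<gamma>))"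
      using iterate[OF M T(1), of "m-k"] unfolding m_def by simp
    also have "m - (m-k) = k" using T unfolding m_def by simp
    also have "(\<Sum>\<gamma>\<in>{\<gamma>. \<gamma> \<subseteq> T \<and> card \<gamma> = k}. char_poly (?P \<gamma>)) = (\<Sum>\<gamma>\<in>{\<gamma>. \<gamma> \<subseteq> T \<and> card \<gamma> = k}. q)"
      by (rule sum.cong[OF refl]) (use T cpk in auto)
    also have "\<dots> = Polynomial.smult (of_nat (m choose k)) q"
      using n_subsets[OF finT, of k] unfolding m_def by (simp add: of_nat_poly)
    finally have d1: "(pderiv ^^ (m-k)) (char_poly (?P T)) = Polynomial.smult c q"
      unfolding c_def by (simp add: smult_smult)
    have "m - p = (k - p) + (m - k)" using T assms(5) unfolding m_def by simp
    then have "(pderiv ^^ (m-p)) (char_poly (?P T)) = (pderiv ^^ (k-p)) ((pderiv ^^ (m-k)) (char_poly (?P T)))"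
      by (simp add: funpow_add)
    also have "\<dots> = Polynomial.smult c ((pderiv ^^ (k-p)) q)" unfolding d1 funpow_pderiv_smult ..
    finally have d2: "(pderiv ^^ (m-p)) (char_poly (?P T)) = Polynomial.smult c ((pderiv ^^ (k-p)) q)" .
    have "(pderiv ^^ (m-p)) (char_poly (?P T)) =
      Polynomial.smult (of_nat (fact (m-p))) (\<Sum>\<alpha>\<in>{\<alpha>. \<alpha> \<subseteq> T \<and> card \<alpha> = m - (m-p)}. char_poly (?P \<alpha>))"
      using iterate[OF M T(1), of "m-p"] unfolding m_def by simp
    also have "m - (m-p) = p" using T assms(5) unfolding m_def by simp
    finally have d3: "(pderiv ^^ (m-p)) (char_poly (?P T)) =
      Polynomial.smult (of_nat (fact (m-p))) (\<Sum>\<alpha>\<in>{\<alpha>. \<alpha> \<subseteq> T \<and> card \<alpha> = p}. char_poly (?P \<alpha>))" .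
    have ev: "poly (\<Sum>\<alpha>\<in>{\<alpha>. \<alpha> \<subseteq> T \<and> card \<alpha> = p}. char_poly (?P \<alpha>)) 0
        = (-1)^p * (\<Sum>\<alpha>\<in>{\<alpha>. \<alpha> \<subseteq> T \<and> card \<alpha> = p}. det (?P \<alpha>))"
      unfolding poly_sum sum_distrib_left
    proof (rule sum.cong[OF refl])
      fix \<alpha> assume "\<alpha> \<in> {\<alpha>. \<alpha> \<subseteq> T \<and> card \<alpha> = p}"
      then have a: "\<alpha> \<subseteq> {0..<n}" "card \<alpha> = p" using T by auto
      show "poly (char_poly (?P \<alpha>)) 0 = (-1)^p * det (?P \<alpha>)"
        using char_poly_at_0[OF P_carrier[OF M a(1)]] a(2) by simp
    qed
    have "of_nat (fact (m-p)) * ((-1)^p * (\<Sum>\<alpha>\<in>{\<alpha>. \<alpha> \<subseteq> T \<and> card \<alpha> = p}. det (?P \<alpha>)))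
        = c * poly ((pderiv ^^ (k-p)) q) 0"
      using arg_cong[OF trans[OF d3[symmetric] d2], of "\<lambda>x. poly x 0"] ev by simp
    then have "(\<Sum>\<alpha>\<in>{\<alpha>. \<alpha> \<subseteq> T \<and> card \<alpha> = p}. det (?P \<alpha>))
        = (-1)^p * c * poly ((pderiv ^^ (k-p)) q) 0 / of_nat (fact (m-p))"
      proof -
        have nz: "(of_nat (fact (m-p)) :: complex) \<noteq> 0" by simp
        have e: "of_nat (fact (m-p)) * ((-1)^p * (\<Sum>\<alpha>\<in>{\<alpha>. \<alpha> \<subseteq> T \<and> card \<alpha> = p}. det (?P \<alpha>))) = c * poly ((pderiv ^^ (k-p)) q) 0" by fact
        have sq: "(-1::complex)^p * ((-1)^p * x) = x" for x
          by (simp add: mult.assoc[symmetric] power_mult_distrib[symmetric])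
        have "(-1)^p * (\<Sum>\<alpha>\<in>{\<alpha>. \<alpha> \<subseteq> T \<and> card \<alpha> = p}. det (?P \<alpha>)) = c * poly ((pderiv ^^ (k-p)) q) 0 / of_nat (fact (m-p))"
          using e nz by (simp add: eq_divide_eq mult.commute)
        then have "(-1)^p * ((-1)^p * (\<Sum>\<alpha>\<in>{\<alpha>. \<alpha> \<subseteq> T \<and> card \<alpha> = p}. det (?P \<alpha>))) = (-1)^p * (c * poly ((pderiv ^^ (k-p)) q) 0 / of_nat (fact (m-p)))"
          by simp
        then show ?thesis unfolding sq by (simp add: mult.assoc)
      qed
    then show ?thesis unfolding H_def c_def m_def by (simp add: mult.assoc)
  qed
  define f where "f b = (\<Sum>d\<le>b. of_nat (b choose d) * ((-1)^d * H (n - d)))" for b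
  show ?thesis
  proof (intro exI[of _ f] allI impI)
    fix \<beta> assume b: "\<beta> \<subseteq> {0..<n} \<and> card \<beta> \<le> n - k"
    have bsub: "\<beta> \<subseteq> {0..<n}" and bc: "card \<beta> \<le> n - k" using b by auto
    have finb: "finite \<beta>" using bsub finite_subset by blast
    let ?A = "{\<alpha>. \<alpha> \<subseteq> {0..<n} \<and> card \<alpha> = p}"
    have finA: "finite ?A" by (rule finite_subset[of _ "Pow {0..<n}"]) auto
    let ?g = "\<lambda>\<alpha>. det (?P \<alpha>)"
    have "(\<Sum>\<alpha>\<in>{\<alpha>. \<alpha> \<subseteq> {0..<n} \<and> \<beta> \<subseteq> \<alpha> \<and> card \<alpha> = p}. ?g \<alpha>)
        = (\<Sum>\<alpha>\<in>{\<alpha>\<in>?A. \<beta> \<subseteq> \<alpha>}. ?g \<alpha>)"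
      by (rule sum.cong) auto
    also have "\<dots> = (\<Sum>\<alpha>\<in>?A. if \<beta> \<subseteq> \<alpha> then ?g \<alpha> else 0)"
      by (rule sum.inter_filter[OF finA])
    also have "\<dots> = (\<Sum>\<alpha>\<in>?A. ?g \<alpha> * (\<Sum>\<delta>\<in>Pow (\<beta> - \<alpha>). (-1) ^ card \<delta>))"
      by (rule sum.cong[OF refl]) (use finb in \<open>auto simp: alt_Pow\<close>)
    also have "\<dots> = (\<Sum>\<alpha>\<in>?A. \<Sum>\<delta>\<in>Pow \<beta>. if \<delta> \<inter> \<alpha> = {} then (-1) ^ card \<delta> * ?g \<alpha> else 0)"
    proof (rule sum.cong[OF refl])
      fix \<alpha>
      have eq: "Pow (\<beta> - \<alpha>) = {\<delta>\<in>Pow \<beta>. \<delta> \<inter> \<alpha> = {}}" by blast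
      have fP: "finite (Pow \<beta>)" using finb by simp
      show "?g \<alpha> * (\<Sum>\<delta>\<in>Pow (\<beta> - \<alpha>). (-1) ^ card \<delta>) =
          (\<Sum>\<delta>\<in>Pow \<beta>. if \<delta> \<inter> \<alpha> = {} then (-1) ^ card \<delta> * ?g \<alpha> else 0)"
        unfolding eq sum_distrib_left sum.inter_filter[OF fP] by (rule sum.cong) (auto simp: mult.commute)
    qed
    also have "\<dots> = (\<Sum>\<delta>\<in>Pow \<beta>. \<Sum>\<alpha>\<in>?A. if \<delta> \<inter> \<alpha> = {} then (-1) ^ card \<delta> * ?g \<alpha> else 0)"
      by (rule sum.swap)
    also have "\<dots> = (\<Sum>\<delta>\<in>Pow \<beta>. (-1) ^ card \<delta> * H (n - card \<delta>))"
    proof (rule sum.cong[OF refl])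
      fix \<delta> assume d: "\<delta> \<in> Pow \<beta>"
      have fd: "finite \<delta>" using d finb finite_subset by blast
      have cd: "card \<delta> \<le> card \<beta>" using d finb card_mono by blast
      have dsub: "\<delta> \<subseteq> {0..<n}" using d bsub by blast
      have cT: "card ({0..<n} - \<delta>) = n - card \<delta>" using card_Diff_subset[OF fd dsub] by simp
      have T: "{0..<n} - \<delta> \<subseteq> {0..<n}" "k \<le> card ({0..<n} - \<delta>)"
        using cT cd bc kn by auto
      have "(\<Sum>\<alpha>\<in>?A. if \<delta> \<inter> \<alpha> = {} then (-1) ^ card \<delta> * ?g \<alpha> else 0)
          = (\<Sum>\<alpha>\<in>{\<alpha>\<in>?A. \<delta> \<inter> \<alpha> = {}}. (-1) ^ card \<delta> * ?g \<alpha>)"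
        by (rule sum.inter_filter[OF finA, symmetric])
      also have "{\<alpha>\<in>?A. \<delta> \<inter> \<alpha> = {}} = {\<alpha>. \<alpha> \<subseteq> {0..<n} - \<delta> \<and> card \<alpha> = p}" by blast
      also have "(\<Sum>\<alpha>\<in>{\<alpha>. \<alpha> \<subseteq> {0..<n} - \<delta> \<and> card \<alpha> = p}. (-1) ^ card \<delta> * ?g \<alpha>)
          = (-1) ^ card \<delta> * H (n - card \<delta>)"
        unfolding sum_distrib_left[symmetric] F[OF T] cT ..
      finally show "(\<Sum>\<alpha>\<in>?A. if \<delta> \<inter> \<alpha> = {} then (-1) ^ card \<delta> * ?g \<alpha> else 0)
          = (-1) ^ card \<delta> * H (n - card \<delta>)" .
    qed
    also have "\<dots> = f (card \<beta>)"
      unfolding f_def by (rule sum_Pow_card[OF finb])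
    finally show "(\<Sum>\<alpha>\<in>{\<alpha>. \<alpha> \<subseteq> {0..<n} \<and> \<beta> \<subseteq> \<alpha> \<and> card \<alpha> = p}. ?g \<alpha>) = f (card \<beta>)" .
  qed
qed

end
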